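(* Let $f$ be a non-trivial constraint and let $P$ be a multilinear polynomial over $\mathbb{Q}$ in $\ell$ variables of degree $d$ with $0\le d\le\deg(f)$. Then there exist $M$, constraints $f_1,\dots,f_M$ each expressible by $f$ with constants, index tuples $(j_i^1,\dots,j_i^{\mathrm{ar}(f_i)})$ with entries in $[\ell]$, and rationals $\alpha_1,\dots,\alpha_M\in\mathbb{Q}$ such that the polynomial identity $$P(x_1,\dots,x_\ell)=\sum_{i=1}^M\alpha_i\cdot P_{f_i}(x_{j_i^1},\dots,x_{j_i^{\mathrm{ar}(f_i)}})$$ holds.
   Context: A $k$-ary constraint is $f\colon\{0,1\}^k\to\{0,1\}$ ($k=\mathrm{ar}(f)$), trivial if it is constant. Its characteristic polynomial $P_f$ is the unique multilinear polynomial over $\mathbb{R}$ in $k$ variables with $P_f(x)=f(x)$ for all $x\in\{0,1\}^k$; $\deg(f)=\deg(P_f)$. A $d$-ary constraint $g$ is expressible by $f$ with constants if $g(x_1,\dots,x_d)=f(\xi_1,\dots,\xi_k)$ identically, where each $\xi_j$ is either a variable $x_i$ for some $i\in[d]$ or one of the constants $0,1$. *)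

theory Defs
  imports Complex_Main
begin

text \<open>A multilinear polynomial over the rationals in the variables x_0, x_1, ... is
  represented by its coefficient function: the coefficient of the monomial
  prod_{i in S} x_i is c S.\<close>
type_synonym mlpoly = "nat set \<Rightarrow> rat"

definition ml_poly :: "nat \<Rightarrow> mlpoly \<Rightarrow> bool" where
  "ml_poly n c \<longleftrightarrow> (\<forall>S. c S \<noteq> 0 \<longrightarrow> S \<subseteq> {..<n})"

definition ml_eval :: "nat \<Rightarrow> mlpoly \<Rightarrow> (nat \<Rightarrow> rat) \<Rightarrow> rat" where
  "ml_eval n c x = (\<Sum>S\<in>Pow {..<n}. c S * (\<Prod>i\<in>S. x i))"

text \<open>Degree (the zero polynomial gets degree 0).\<close>
definition ml_deg :: "mlpoly \<Rightarrow> nat" where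
  "ml_deg c = Max (insert 0 {card S | S. c S \<noteq> 0})"

definition bool01 :: "bool \<Rightarrow> rat" where
  "bool01 b = (if b then 1 else 0)"

definition nontrivial :: "nat \<Rightarrow> (bool list \<Rightarrow> bool) \<Rightarrow> bool" where
  "nontrivial k f \<longleftrightarrow> (\<exists>xs ys. length xs = k \<and> length ys = k \<and> f xs \<noteq> f ys)"

definition char_poly :: "nat \<Rightarrow> (bool list \<Rightarrow> bool) \<Rightarrow> mlpoly" where
  "char_poly k f = (THE c. ml_poly k c \<and>
     (\<forall>xs. length xs = k \<longrightarrow> ml_eval k c (\<lambda>i. bool01 (xs ! i)) = bool01 (f xs)))"

definition cdeg :: "nat \<Rightarrow> (bool list \<Rightarrow> bool) \<Rightarrow> nat" where
  "cdeg k f = ml_deg (char_poly k f)"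

text \<open>The d-ary constraint g is expressible by the k-ary constraint f with constants:
  each argument position j < k of f is fed either a variable x_i (Inl i, i < d)
  or a constant (Inr b).\<close>
definition expressible :: "nat \<Rightarrow> (bool list \<Rightarrow> bool) \<Rightarrow> nat \<Rightarrow> (bool list \<Rightarrow> bool) \<Rightarrow> bool" where
  "expressible d g k f \<longleftrightarrow>
     (\<exists>\<xi> :: nat \<Rightarrow> nat + bool.
        (\<forall>j<k. \<forall>i. \<xi> j = Inl i \<longrightarrow> i < d) \<and>
        (\<forall>xs. length xs = d \<longrightarrow>
           g xs = f (map (\<lambda>j. case \<xi> j of Inl i \<Rightarrow> xs ! i | Inr b \<Rightarrow> b) [0..<k])))"

end

theory Submission
  imports Defs
begin

definition mono :: "nat set \<Rightarrow> (nat \<Rightarrow> rat) \<Rightarrow> rat" where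
  "mono S x = (\<Prod>i\<in>S. x i)"

lemma bool01_simps [simp]: "bool01 True = 1" "bool01 False = 0"
  by (simp_all add: bool01_def)

lemma ml_eval_mono: "ml_eval n c x = (\<Sum>S\<in>Pow {..<n}. c S * mono S x)"
  by (simp add: ml_eval_def mono_def)

lemma ml_eval_cong: "(\<And>i. i < n \<Longrightarrow> x i = y i) \<Longrightarrow> ml_eval n c x = ml_eval n c y"
  unfolding ml_eval_def
  by (intro sum.cong refl arg_cong2[where f="(*)"] prod.cong) (auto)

lemma pow_split:
  assumes "finite A" "t \<in> A"
  shows "(\<Sum>S\<in>Pow A. F S) = (\<Sum>S\<in>Pow (A - {t}). F S + F (insert t S))"
proof -
  have A: "A = insert t (A - {t})" using assms by auto
  have "Pow A = Pow (A - {t}) \<union> insert t ` Pow (A - {t})"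
    by (subst A, subst Pow_insert) simp
  moreover have "Pow (A - {t}) \<inter> insert t ` Pow (A - {t}) = {}" by auto
  moreover have "inj_on (insert t) (Pow (A - {t}))"
    by (auto simp: inj_on_def)
  ultimately show ?thesis using assms
    by (simp add: sum.union_disjoint sum.reindex sum.distrib)
qed

lemma ml_eval_Suc:
  "ml_eval (Suc n) c x = ml_eval n c x + x n * ml_eval n (\<lambda>S. c (insert n S)) x"
proof -
  have "ml_eval (Suc n) c x = (\<Sum>S\<in>Pow {..<n}. c S * mono S x + c (insert n S) * mono (insert n S) x)"
    unfolding ml_eval_mono
    by (subst pow_split[where t=n]) (auto simp: lessThan_Suc intro!: sum.cong arg_cong[where f="\<lambda>A. Pow A"])
  also have "\<dots> = (\<Sum>S\<in>Pow {..<n}. c S * mono S x + x n * (c (insert n S) * mono S x))"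
    apply (intro sum.cong refl)
    apply (simp add: mono_def)
    apply (subst prod.insert)
    by (auto intro: finite_subset)
  also have "\<dots> = ml_eval n c x + x n * ml_eval n (\<lambda>S. c (insert n S)) x"
    by (simp add: ml_eval_mono sum.distrib sum_distrib_left)
  finally show ?thesis .
qed

lemma ml_eval_diff: "ml_eval n (\<lambda>S. c S - d S) x = ml_eval n c x - ml_eval n d x"
  by (simp add: ml_eval_def sum_subtractf left_diff_distrib)

lemma ml_eval_0: "ml_eval 0 c x = c {}"
  by (simp add: ml_eval_def)


lemma char_exists:
  "\<exists>c. ml_poly n c \<and> (\<forall>xs. length xs = n \<longrightarrow> ml_eval n c (\<lambda>i. bool01 (xs ! i)) = bool01 (g xs))"
proof (induction n arbitrary: g)
  case 0
  show ?case
    by (rule exI[where x="\<lambda>S. if S = {} then bool01 (g []) else 0"])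
       (auto simp: ml_poly_def ml_eval_0)
next
  case (Suc n)
  obtain c0 where c0: "ml_poly n c0" "\<And>xs. length xs = n \<Longrightarrow> ml_eval n c0 (\<lambda>i. bool01 (xs ! i)) = bool01 (g (xs @ [False]))"
    using Suc.IH[of "\<lambda>xs. g (xs @ [False])"] by blast
  obtain c1 where c1: "ml_poly n c1" "\<And>xs. length xs = n \<Longrightarrow> ml_eval n c1 (\<lambda>i. bool01 (xs ! i)) = bool01 (g (xs @ [True]))"
    using Suc.IH[of "\<lambda>xs. g (xs @ [True])"] by blast
  define c where "c S = (if n \<in> S then c1 (S - {n}) - c0 (S - {n}) else c0 S)" for S
  have pc: "ml_poly (Suc n) c"
    unfolding ml_poly_def
  proof (intro allI impI)
    fix S assume "c S \<noteq> 0"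
    then show "S \<subseteq> {..<Suc n}"
    proof (cases "n \<in> S")
      case True
      then have "c1 (S - {n}) \<noteq> 0 \<or> c0 (S - {n}) \<noteq> 0" using \<open>c S \<noteq> 0\<close> by (auto simp: c_def)
      then have "S - {n} \<subseteq> {..<n}" using c0(1) c1(1) unfolding ml_poly_def by blast
      then show ?thesis by auto
    next
      case False
      then have "c0 S \<noteq> 0" using \<open>c S \<noteq> 0\<close> by (auto simp: c_def)
      then have "S \<subseteq> {..<n}" using c0(1) unfolding ml_poly_def by blast
      then show ?thesis by auto
    qed
  qed
  have ev: "ml_eval (Suc n) c x = ml_eval n c0 x + x n * (ml_eval n c1 x - ml_eval n c0 x)" for x
  proof -
    have "ml_eval n c x = ml_eval n c0 x"
      unfolding ml_eval_def by (intro sum.cong refl) (auto simp: c_def)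
    moreover have "ml_eval n (\<lambda>S. c (insert n S)) x = ml_eval n (\<lambda>S. c1 S - c0 S) x"
      unfolding ml_eval_def
    proof (intro sum.cong refl)
      fix S assume "S \<in> Pow {..<n}"
      then have "insert n S - {n} = S" by auto
      then show "c (insert n S) * (\<Prod>i\<in>S. x i) = (c1 S - c0 S) * (\<Prod>i\<in>S. x i)"
        by (simp add: c_def)
    qed
    ultimately show ?thesis by (simp add: ml_eval_Suc ml_eval_diff)
  qed
  show ?case
  proof (intro exI conjI allI impI)
    show "ml_poly (Suc n) c" by (rule pc)
    fix xs :: "bool list" assume len: "length xs = Suc n"
    then obtain ys b where xs: "xs = ys @ [b]" and ly: "length ys = n"
      by (metis length_Suc_conv_rev)
    have e0: "ml_eval n c0 (\<lambda>i. bool01 (xs ! i)) = bool01 (g (ys @ [False]))"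
      using c0(2)[OF ly] by (subst ml_eval_cong[where y="\<lambda>i. bool01 (ys ! i)"]) (auto simp: xs ly nth_append)
    have e1: "ml_eval n c1 (\<lambda>i. bool01 (xs ! i)) = bool01 (g (ys @ [True]))"
      using c1(2)[OF ly] by (subst ml_eval_cong[where y="\<lambda>i. bool01 (ys ! i)"]) (auto simp: xs ly nth_append)
    have xn: "xs ! n = b" using xs ly[symmetric] by simp
    show "ml_eval (Suc n) c (\<lambda>i. bool01 (xs ! i)) = bool01 (g xs)"
      unfolding ev e0 e1 xn by (cases b) (auto simp: xs bool01_def)
  qed
qed

lemma prod_ind: "finite U \<Longrightarrow> (\<Prod>i\<in>U. (if i \<in> S then 1 else 0 :: rat)) = (if U \<subseteq> S then 1 else 0)"
  by (induction U rule: finite_induct) auto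

lemma ml_zero:
  assumes p: "ml_poly n c" and z: "\<And>xs. length xs = n \<Longrightarrow> ml_eval n c (\<lambda>i. bool01 (xs ! i)) = 0"
  shows "c S = 0"
proof (cases "S \<subseteq> {..<n}")
  case False then show ?thesis using p by (auto simp: ml_poly_def)
next
  case True
  show ?thesis using True
  proof (induction "card S" arbitrary: S rule: less_induct)
    case less
    have fS: "finite S" using less.prems finite_subset by blast
    define xs where "xs = map (\<lambda>i. i \<in> S) [0..<n]"
    have "0 = ml_eval n c (\<lambda>i. bool01 (xs ! i))" using z[of xs] by (simp add: xs_def)
    also have "\<dots> = ml_eval n c (\<lambda>i. if i \<in> S then 1 else 0)"
      by (rule ml_eval_cong) (auto simp: xs_def bool01_def)
    also have "\<dots> = (\<Sum>U\<in>Pow {..<n}. if U \<subseteq> S then c U else 0)"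
      unfolding ml_eval_def
    proof (intro sum.cong refl)
      fix U assume "U \<in> Pow {..<n}"
      then have "finite U" using finite_subset by blast
      then show "c U * (\<Prod>i\<in>U. if i \<in> S then 1 else 0) = (if U \<subseteq> S then c U else 0)"
        by (simp add: prod_ind)
    qed
    also have "\<dots> = (\<Sum>U\<in>Pow S. c U)"
      using less.prems by (subst sum.If_cases) (auto intro!: sum.cong)
    also have "\<dots> = c S + (\<Sum>U\<in>Pow S - {S}. c U)"
      using fS by (subst sum.remove[of _ S]) auto
    also have "(\<Sum>U\<in>Pow S - {S}. c U) = 0"
    proof (intro sum.neutral ballI)
      fix U assume "U \<in> Pow S - {S}"
      then have "U \<subset> S" by auto
      then show "c U = 0" using less.hyps[of U] less.prems fS psubset_card_mono by blast
    qed
    finally show ?case by simp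
  qed
qed

lemma ml_unique:
  assumes "ml_poly n c" "ml_poly n d"
    and "\<And>xs. length xs = n \<Longrightarrow> ml_eval n c (\<lambda>i. bool01 (xs ! i)) = ml_eval n d (\<lambda>i. bool01 (xs ! i))"
  shows "c = d"
proof
  fix S
  have "(\<lambda>S. c S - d S) S = 0"
  proof (rule ml_zero[where n=n])
    show "ml_poly n (\<lambda>S. c S - d S)" using assms(1,2) unfolding ml_poly_def
      by (metis diff_self)
  qed (use assms(3) in \<open>simp add: ml_eval_diff\<close>)
  then show "c S = d S" by simp
qed

lemma char_spec:
  "ml_poly n (char_poly n g) \<and> (\<forall>xs. length xs = n \<longrightarrow> ml_eval n (char_poly n g) (\<lambda>i. bool01 (xs ! i)) = bool01 (g xs))"
proof -
  obtain c where c: "ml_poly n c \<and> (\<forall>xs. length xs = n \<longrightarrow> ml_eval n c (\<lambda>i. bool01 (xs ! i)) = bool01 (g xs))"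
    using char_exists by blast
  show ?thesis unfolding char_poly_def
    by (rule theI[where a=c]) (use c in \<open>auto intro: ml_unique\<close>)
qed

lemma char_unique:
  assumes "ml_poly n c" "\<And>xs. length xs = n \<Longrightarrow> ml_eval n c (\<lambda>i. bool01 (xs ! i)) = bool01 (g xs)"
  shows "char_poly n g = c"
  using char_spec[of n g] assms by (intro ml_unique[where n=n]) auto


lemma ml_upd:
  assumes t: "t < n" and p: "ml_poly n c"
  shows "\<exists>c'. ml_poly n c' \<and> (\<forall>x. ml_eval n c' x = ml_eval n c (x(t := v)))"
proof (intro exI conjI allI)
  define c' where "c' S = (if t \<in> S then 0 else c S + v * c (insert t S))" for S
  show "ml_poly n c'"
    unfolding ml_poly_def
  proof (intro allI impI)
    fix S assume "c' S \<noteq> 0"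
    then have "c S \<noteq> 0 \<or> c (insert t S) \<noteq> 0" by (auto simp: c'_def split: if_splits)
    then show "S \<subseteq> {..<n}" using p unfolding ml_poly_def by blast
  qed
  fix x
  have tA: "t \<in> {..<n}" using t by simp
  have "ml_eval n c' x = (\<Sum>S\<in>Pow ({..<n} - {t}). c' S * mono S x + c' (insert t S) * mono (insert t S) x)"
    unfolding ml_eval_mono by (rule pow_split[OF _ tA]) simp
  also have "\<dots> = (\<Sum>S\<in>Pow ({..<n} - {t}). c S * mono S (x(t := v)) + c (insert t S) * mono (insert t S) (x(t := v)))"
  proof (intro sum.cong refl)
    fix S assume S: "S \<in> Pow ({..<n} - {t})"
    then have tS: "t \<notin> S" and fS: "finite S" by (auto intro: finite_subset)
    have m: "mono S (x(t := v)) = mono S x" unfolding mono_def using tS by (intro prod.cong) auto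
    have m2: "mono (insert t S) (x(t := v)) = v * mono S x" using tS fS m by (simp add: mono_def)
    show "c' S * mono S x + c' (insert t S) * mono (insert t S) x =
          c S * mono S (x(t := v)) + c (insert t S) * mono (insert t S) (x(t := v))"
      using tS by (simp add: c'_def m m2 algebra_simps)
  qed
  also have "\<dots> = ml_eval n c (x(t := v))"
    unfolding ml_eval_mono by (rule pow_split[OF _ tA, symmetric]) simp
  finally show "ml_eval n c' x = ml_eval n c (x(t := v))" .
qed

definition hh :: "nat \<Rightarrow> (bool list \<Rightarrow> bool) \<Rightarrow> (nat \<Rightarrow> bool option) \<Rightarrow> bool list \<Rightarrow> bool" where
  "hh k f \<rho> xs = f (map (\<lambda>j. case \<rho> j of None \<Rightarrow> xs ! j | Some b \<Rightarrow> b) [0..<k])"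

definition HH :: "nat \<Rightarrow> (bool list \<Rightarrow> bool) \<Rightarrow> (nat \<Rightarrow> bool option) \<Rightarrow> (nat \<Rightarrow> rat) \<Rightarrow> rat" where
  "HH k f \<rho> z = ml_eval k (char_poly k (hh k f \<rho>)) z"

lemma hh_expr: "expressible k (hh k f \<rho>) k f"
  unfolding expressible_def
  apply (rule exI[where x="\<lambda>j. case \<rho> j of None \<Rightarrow> Inl j | Some b \<Rightarrow> Inr b"])
  apply (auto simp: hh_def split: option.splits intro!: map_cong arg_cong[where f=f])
  done

lemma HH_upd:
  assumes t: "t < k" and rt: "\<rho> t = None"
  shows "HH k f (\<rho>(t := Some b)) z = HH k f \<rho> (z(t := bool01 b))"
proof -
  let ?c = "char_poly k (hh k f \<rho>)"
  have sp: "ml_poly k ?c" using char_spec by blast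
  obtain c' where c': "ml_poly k c'" "\<And>x. ml_eval k c' x = ml_eval k ?c (x(t := bool01 b))"
    using ml_upd[OF t sp] by blast
  have "char_poly k (hh k f (\<rho>(t := Some b))) = c'"
  proof (rule char_unique[OF c'(1)])
    fix xs :: "bool list" assume len: "length xs = k"
    have "ml_eval k c' (\<lambda>i. bool01 (xs ! i)) = ml_eval k ?c ((\<lambda>i. bool01 (xs ! i))(t := bool01 b))"
      by (rule c'(2))
    also have "\<dots> = ml_eval k ?c (\<lambda>i. bool01 (xs[t := b] ! i))"
      by (rule ml_eval_cong) (auto simp: len nth_list_update)
    also have "\<dots> = bool01 (hh k f \<rho> (xs[t := b]))"
      using char_spec len by simp
    also have "hh k f \<rho> (xs[t := b]) = hh k f (\<rho>(t := Some b)) xs"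
      unfolding hh_def using rt len
      by (intro arg_cong[where f=f] map_cong refl) (auto simp: nth_list_update split: option.splits)
    finally show "ml_eval k c' (\<lambda>i. bool01 (xs ! i)) = bool01 (hh k f (\<rho>(t := Some b)) xs)" .
  qed
  then show ?thesis unfolding HH_def using c'(2) by simp
qed

lemma HH_set:
  assumes "finite A" "A \<subseteq> {..<k}" "\<forall>j\<in>A. \<rho> j = None"
  shows "HH k f (\<lambda>j. if j \<in> A then Some b else \<rho> j) z = HH k f \<rho> (\<lambda>j. if j \<in> A then bool01 b else z j)"
  using assms
proof (induction A arbitrary: z rule: finite_induct)
  case empty
  then show ?case by simp
next
  case (insert t A)
  have e1: "(\<lambda>j. if j \<in> insert t A then Some b else \<rho> j) = (\<lambda>j. if j \<in> A then Some b else \<rho> j)(t := Some b)"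
    by auto
  have "HH k f ((\<lambda>j. if j \<in> A then Some b else \<rho> j)(t := Some b)) z
      = HH k f (\<lambda>j. if j \<in> A then Some b else \<rho> j) (z(t := bool01 b))"
    using insert by (intro HH_upd) auto
  also have "\<dots> = HH k f \<rho> (\<lambda>j. if j \<in> A then bool01 b else (z(t := bool01 b)) j)"
    using insert by auto
  also have "(\<lambda>j. if j \<in> A then bool01 b else (z(t := bool01 b)) j) = (\<lambda>j. if j \<in> insert t A then bool01 b else z j)"
    by auto
  finally have X: "HH k f ((\<lambda>j. if j \<in> A then Some b else \<rho> j)(t := Some b)) z
      = HH k f \<rho> (\<lambda>j. if j \<in> insert t A then bool01 b else z j)" .
  show ?case unfolding e1 by (rule X)
qed

lemma HH_None: "HH k f (\<lambda>_. None) z = ml_eval k (char_poly k f) z"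
proof -
  have "char_poly k (hh k f (\<lambda>_. None)) = char_poly k f"
  proof (rule char_unique)
    show "ml_poly k (char_poly k f)" using char_spec by blast
    fix xs :: "bool list" assume "length xs = k"
    then have "hh k f (\<lambda>_. None) xs = f xs" by (simp add: hh_def) (metis map_nth)
    then show "ml_eval k (char_poly k f) (\<lambda>i. bool01 (xs ! i)) = bool01 (hh k f (\<lambda>_. None) xs)"
      using char_spec \<open>length xs = k\<close> by simp
  qed
  then show ?thesis by (simp add: HH_def)
qed


lemma sum_list_neg: "(\<Sum>p\<leftarrow>L. - (g p :: rat)) = - (\<Sum>p\<leftarrow>L. g p)"
  by (induction L) auto

lemma stage:
  assumes "finite R" "R \<subseteq> T" "T \<subseteq> {..<k}"
  shows "\<exists>L e. (\<forall>p\<in>set L. \<forall>j\<in>T - R. snd p j = None) \<and> e (T - R) = char_poly k f T \<and>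
     (\<forall>z. (\<Sum>p\<leftarrow>L. fst p * HH k f (snd p) z) = (\<Sum>W\<in>Pow (T - R). e W * mono W z))"
  using assms
proof (induction R rule: finite_induct)
  case empty
  define \<rho>0 where "\<rho>0 = (\<lambda>j. if j \<in> {..<k} - T then Some False else (\<lambda>_. None) j)"
  have fT: "finite T" using empty finite_subset by blast
  show ?case
  proof (rule exI[where x="[(1::rat, \<rho>0)]"], rule exI[where x="char_poly k f"], intro conjI allI)
    show "\<forall>p\<in>set [(1::rat, \<rho>0)]. \<forall>j\<in>T - {}. snd p j = None"
      by (auto simp: \<rho>0_def)
    show "char_poly k f (T - {}) = char_poly k f T" by simp
    fix z
    have "(\<Sum>p\<leftarrow>[(1::rat, \<rho>0)]. fst p * HH k f (snd p) z) = HH k f \<rho>0 z" by simp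
    also have "\<dots> = HH k f (\<lambda>_. None) (\<lambda>j. if j \<in> {..<k} - T then bool01 False else z j)"
      unfolding \<rho>0_def by (rule HH_set) auto
    also have "\<dots> = (\<Sum>S\<in>Pow {..<k}. char_poly k f S * mono S (\<lambda>j. if j \<in> {..<k} - T then 0 else z j))"
      unfolding bool01_simps by (simp add: HH_None ml_eval_mono)
    also have "\<dots> = (\<Sum>S\<in>Pow T. char_poly k f S * mono S z)"
    proof (rule sum.mono_neutral_cong_right)
      show "Pow T \<subseteq> Pow {..<k}" using empty by auto
      show "\<forall>S\<in>Pow {..<k} - Pow T. char_poly k f S * mono S (\<lambda>j. if j \<in> {..<k} - T then 0 else z j) = 0"
      proof
        fix S assume S: "S \<in> Pow {..<k} - Pow T"
        then obtain j where "j \<in> S" "j \<notin> T" "j < k" by auto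
        moreover have "finite S" using S finite_subset by auto
        ultimately show "char_poly k f S * mono S (\<lambda>j. if j \<in> {..<k} - T then 0 else z j) = 0"
          unfolding mono_def by (auto intro!: prod_zero bexI[where x=j])
      qed
      fix S assume "S \<in> Pow T"
      then show "char_poly k f S * mono S (\<lambda>j. if j \<in> {..<k} - T then 0 else z j) = char_poly k f S * mono S z"
        unfolding mono_def by (auto intro!: prod.cong)
    qed simp
    finally show "(\<Sum>p\<leftarrow>[(1::rat, \<rho>0)]. fst p * HH k f (snd p) z) = (\<Sum>W\<in>Pow (T - {}). char_poly k f W * mono W z)"
      by simp
  qed
next
  case (insert t R)
  then obtain L e where L: "\<forall>p\<in>set L. \<forall>j\<in>T - R. snd p j = None" and e: "e (T - R) = char_poly k f T"
    and s: "\<And>z. (\<Sum>p\<leftarrow>L. fst p * HH k f (snd p) z) = (\<Sum>W\<in>Pow (T - R). e W * mono W z)" by auto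
  have tT: "t \<in> T - R" using insert by auto
  have tk: "t < k" using insert by auto
  have fTR: "finite (T - R)" using insert finite_subset by blast
  define L' where "L' = map (\<lambda>p. (fst p, (snd p)(t := Some True))) L @ map (\<lambda>p. (- fst p, (snd p)(t := Some False))) L"
  have eqTR: "T - insert t R = T - R - {t}" by auto
  show ?case
  proof (intro exI conjI allI)
    show "\<forall>p\<in>set L'. \<forall>j\<in>T - insert t R. snd p j = None" using L by (fastforce simp: L'_def split: if_splits)
    show "e (insert t (T - insert t R)) = char_poly k f T"
      using e tT by (metis eqTR insert_Diff)
    fix z
    have hv: "HH k f ((snd p)(t := Some b)) z = HH k f (snd p) (z(t := bool01 b))" if "p \<in> set L" for p b
      using L that tT tk by (intro HH_upd) auto
    have "(\<Sum>p\<leftarrow>L'. fst p * HH k f (snd p) z) =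
          (\<Sum>p\<leftarrow>L. fst p * HH k f (snd p) (z(t := 1))) - (\<Sum>p\<leftarrow>L. fst p * HH k f (snd p) (z(t := 0)))"
    proof -
      have a: "(\<Sum>p\<leftarrow>map (\<lambda>p. (fst p, (snd p)(t := Some True))) L. fst p * HH k f (snd p) z)
            = (\<Sum>p\<leftarrow>L. fst p * HH k f (snd p) (z(t := 1)))"
        unfolding map_map o_def using hv[of _ True] by (intro arg_cong[where f=sum_list] map_cong) (auto simp: bool01_def)
      have b: "(\<Sum>p\<leftarrow>map (\<lambda>p. (- fst p, (snd p)(t := Some False))) L. fst p * HH k f (snd p) z)
            = (\<Sum>p\<leftarrow>L. - (fst p * HH k f (snd p) (z(t := 0))))"
        unfolding map_map o_def using hv[of _ False] by (intro arg_cong[where f=sum_list] map_cong) (auto simp: bool01_def)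
      show ?thesis unfolding L'_def map_append sum_list_append a b
        by (simp add: sum_list_neg)
    qed
    also have "\<dots> = (\<Sum>W\<in>Pow (T - R). e W * mono W (z(t := 1))) - (\<Sum>W\<in>Pow (T - R). e W * mono W (z(t := 0)))"
      by (simp add: s)
    also have "\<dots> = (\<Sum>W\<in>Pow (T - R). e W * (mono W (z(t := 1)) - mono W (z(t := 0))))"
      by (simp add: sum_subtractf right_diff_distrib)
    also have "\<dots> = (\<Sum>W\<in>Pow (T - R - {t}). e W * (mono W (z(t := 1)) - mono W (z(t := 0))) +
                      e (insert t W) * (mono (insert t W) (z(t := 1)) - mono (insert t W) (z(t := 0))))"
      by (rule pow_split[OF fTR tT])
    also have "\<dots> = (\<Sum>W\<in>Pow (T - insert t R). e (insert t W) * mono W z)"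
      unfolding eqTR
    proof (intro sum.cong refl)
      fix W assume W: "W \<in> Pow (T - R - {t})"
      then have tW: "t \<notin> W" and fW: "finite W" using fTR finite_subset by auto
      have m: "mono W (z(t := v)) = mono W z" for v unfolding mono_def using tW by (intro prod.cong) auto
      have m2: "mono (insert t W) (z(t := v)) = v * mono W z" for v using tW fW m by (simp add: mono_def)
      show "e W * (mono W (z(t := 1)) - mono W (z(t := 0))) +
            e (insert t W) * (mono (insert t W) (z(t := 1)) - mono (insert t W) (z(t := 0))) =
            e (insert t W) * mono W z"
        by (simp add: m m2)
    qed
    finally show "(\<Sum>p\<leftarrow>L'. fst p * HH k f (snd p) z) = (\<Sum>W\<in>Pow (T - insert t R). e (insert t W) * mono W z)" .
  qed
qed


definition inV :: "nat \<Rightarrow> (bool list \<Rightarrow> bool) \<Rightarrow> nat \<Rightarrow> ((nat \<Rightarrow> rat) \<Rightarrow> rat) \<Rightarrow> bool" where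
  "inV k f l \<Phi> \<longleftrightarrow> (\<exists>fs :: (nat \<times> (bool list \<Rightarrow> bool) \<times> nat list \<times> rat) list.
           (\<forall>(a, g, js, \<alpha>) \<in> set fs.
               expressible a g k f \<and> length js = a \<and> (\<forall>j\<in>set js. j < l)) \<and>
           (\<forall>x :: nat \<Rightarrow> rat.
               \<Phi> x =
               (\<Sum>(a, g, js, \<alpha>) \<leftarrow> fs. \<alpha> * ml_eval a (char_poly a g) (\<lambda>t. x (js ! t)))))"

lemma inV_zero: "inV k f l (\<lambda>x. 0)"
  unfolding inV_def by (rule exI[where x="[]"]) simp

lemma inV_add: "inV k f l \<Phi> \<Longrightarrow> inV k f l \<Psi> \<Longrightarrow> inV k f l (\<lambda>x. \<Phi> x + \<Psi> x)"
  unfolding inV_def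
  apply (elim exE conjE)
  subgoal for fs1 fs2 by (rule exI[where x="fs1 @ fs2"]) auto
  done

lemma sum_scale:
  "(\<Sum>(a, g, js, \<alpha>) \<leftarrow> map (\<lambda>(a, g, js, \<alpha>). (a, g, js, r * \<alpha>)) fs. \<alpha> * ml_eval a (char_poly a g) (\<lambda>t. x (js ! t)))
   = r * (\<Sum>(a, g, js, \<alpha>) \<leftarrow> fs. \<alpha> * ml_eval a (char_poly a g) (\<lambda>t. x (js ! t)))"
  by (induction fs) (auto simp: algebra_simps)

lemma inV_scale: "inV k f l \<Phi> \<Longrightarrow> inV k f l (\<lambda>x. r * \<Phi> x)"
  unfolding inV_def
  apply (elim exE conjE)
  subgoal for fs
    apply (rule exI[where x="map (\<lambda>(a, g, js, \<alpha>). (a, g, js, r * \<alpha>)) fs"])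
    apply (rule conjI)
    subgoal by auto
    subgoal by (simp only: sum_scale) simp
    done
  done

lemma inV_sum: "finite I \<Longrightarrow> (\<And>i. i \<in> I \<Longrightarrow> inV k f l (F i)) \<Longrightarrow> inV k f l (\<lambda>x. \<Sum>i\<in>I. F i x)"
  by (induction I rule: finite_induct) (auto intro: inV_zero inV_add)

lemma inV_HH:
  assumes "\<And>j. j < k \<Longrightarrow> \<pi> j < l"
  shows "inV k f l (\<lambda>x. HH k f \<rho> (\<lambda>j. x (\<pi> j)))"
  unfolding inV_def
proof (rule exI[where x="[(k, hh k f \<rho>, map \<pi> [0..<k], 1)]"], intro conjI allI)
  show "\<forall>(a, g, js, \<alpha>)\<in>set [(k, hh k f \<rho>, map \<pi> [0..<k], 1::rat)]. expressible a g k f \<and> length js = a \<and> (\<forall>j\<in>set js. j < l)"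
    using assms hh_expr by auto
  fix x :: "nat \<Rightarrow> rat"
  show "HH k f \<rho> (\<lambda>j. x (\<pi> j)) = (\<Sum>(a, g, js, \<alpha>)\<leftarrow>[(k, hh k f \<rho>, map \<pi> [0..<k], 1)]. \<alpha> * ml_eval a (char_poly a g) (\<lambda>t. x (js ! t)))"
    unfolding HH_def by (simp, rule ml_eval_cong) simp
qed

lemma inV_list:
  assumes "\<And>j. j < k \<Longrightarrow> \<pi> j < l"
  shows "inV k f l (\<lambda>x. \<Sum>p\<leftarrow>L. fst p * HH k f (snd p) (\<lambda>j. x (\<pi> j)))"
proof (induction L)
  case Nil
  then show ?case using inV_zero by simp
next
  case (Cons p L)
  have "inV k f l (\<lambda>x. fst p * HH k f (snd p) (\<lambda>j. x (\<pi> j)) + (\<Sum>p\<leftarrow>L. fst p * HH k f (snd p) (\<lambda>j. x (\<pi> j))))"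
    by (rule inV_add[OF inV_scale[OF inV_HH[OF assms]] Cons.IH])
  then show ?case by simp
qed

lemma inV_const:
  assumes "nontrivial k f"
  shows "inV k f l (\<lambda>x. 1)"
proof -
  obtain ys where ys: "length ys = k" "f ys"
    using assms unfolding nontrivial_def by blast
  have ex: "expressible 0 (\<lambda>_. True) k f"
    unfolding expressible_def
    by (rule exI[where x="\<lambda>j. Inr (ys ! j)"]) (simp add: ys map_nth[of ys, simplified ys])
  have ev: "ml_eval 0 (char_poly 0 (\<lambda>_. True)) x = 1" for x
    using char_spec[of 0 "\<lambda>_. True"] by (simp add: ml_eval_0)
  show ?thesis unfolding inV_def
    by (rule exI[where x="[(0, \<lambda>_. True, [], 1)]"]) (simp add: ex ev)
qed


lemma top_set:
  assumes "0 < cdeg k f"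
  obtains T where "char_poly k f T \<noteq> 0" "card T = cdeg k f" "T \<subseteq> {..<k}"
proof -
  let ?c = "char_poly k f"
  let ?C = "{card U | U. ?c U \<noteq> 0}"
  have p: "ml_poly k ?c" using char_spec by blast
  have "?C \<subseteq> {..k}"
  proof
    fix n assume "n \<in> ?C"
    then obtain U where "n = card U" "?c U \<noteq> 0" by blast
    then have "U \<subseteq> {..<k}" using p unfolding ml_poly_def by blast
    then have "card U \<le> card {..<k}" by (intro card_mono) auto
    then show "n \<in> {..k}" using \<open>n = card U\<close> by simp
  qed
  then have fin: "finite (insert 0 ?C)" using finite_subset by blast
  have "Max (insert 0 ?C) \<in> insert 0 ?C" by (rule Max_in[OF fin]) simp
  moreover have "Max (insert 0 ?C) \<noteq> 0" using assms by (simp add: cdeg_def ml_deg_def)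
  ultimately have "cdeg k f \<in> ?C" by (simp add: cdeg_def ml_deg_def)
  then obtain T where "card T = cdeg k f" "?c T \<noteq> 0" by auto
  moreover then have "T \<subseteq> {..<k}" using p unfolding ml_poly_def by blast
  ultimately show ?thesis using that by blast
qed

lemma inV_mono:
  assumes nt: "nontrivial k f"
  shows "S \<subseteq> {..<l} \<Longrightarrow> card S \<le> cdeg k f \<Longrightarrow> inV k f l (mono S)"
proof (induction "card S" arbitrary: S rule: less_induct)
  case less
  have fS: "finite S" using less.prems finite_subset by blast
  show ?case
  proof (cases "S = {}")
    case True
    have "mono S = (\<lambda>x. 1)" by (auto simp: True mono_def)
    then show ?thesis using inV_const[OF nt] by simp
  next
    case False
    then have cS: "0 < card S" using fS by auto
    have l0: "0 < l" using False less.prems by auto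
    have D0: "0 < cdeg k f" using cS less.prems(2) by linarith
    obtain T where cT: "char_poly k f T \<noteq> 0" and cardT: "card T = cdeg k f" and Tk: "T \<subseteq> {..<k}"
      by (rule top_set[OF D0])
    have fT: "finite T" using Tk finite_subset by blast
    obtain T' where T': "T' \<subseteq> T" "card T' = card S" "finite T'"
      using obtain_subset_with_card_n[of "card S" T] cardT less.prems by auto
    obtain \<pi> where bij: "bij_betw \<pi> T' S" using finite_same_card_bij[OF T'(3) fS T'(2)] by blast
    define \<pi>' where "\<pi>' j = (if j \<in> T' then \<pi> j else 0)" for j
    have \<pi>'l: "\<pi>' j < l" for j
      using bij less.prems l0 unfolding \<pi>'_def bij_betw_def by auto
    have TT: "T - (T - T') = T'" using T' by auto
    obtain L e where e: "e T' = char_poly k f T"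
      and s: "\<And>z. (\<Sum>p\<leftarrow>L. fst p * HH k f (snd p) z) = (\<Sum>W\<in>Pow T'. e W * mono W z)"
      using stage[of "T - T'" T k f] fT Tk unfolding TT by auto
    define \<Phi>1 where "\<Phi>1 x = (\<Sum>p\<leftarrow>L. fst p * HH k f (snd p) (\<lambda>j. x (\<pi>' j)))" for x
    define low where "low x = (\<Sum>W\<in>Pow T' - {T'}. e W * mono (\<pi> ` W) x)" for x
    have V1: "inV k f l \<Phi>1" unfolding \<Phi>1_def by (rule inV_list) (rule \<pi>'l)
    have mW: "mono W (\<lambda>j. x (\<pi>' j)) = mono (\<pi> ` W) x" if "W \<subseteq> T'" for W x
    proof -
      have inj: "inj_on \<pi> W" using bij that unfolding bij_betw_def by (auto intro: inj_on_subset)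
      have "mono W (\<lambda>j. x (\<pi>' j)) = (\<Prod>j\<in>W. x (\<pi> j))"
        unfolding mono_def \<pi>'_def using that by (intro prod.cong) auto
      also have "\<dots> = mono (\<pi> ` W) x" unfolding mono_def by (simp add: prod.reindex[OF inj])
      finally show ?thesis .
    qed
    have \<pi>S: "\<pi> ` T' = S" using bij by (simp add: bij_betw_def)
    have dec: "\<Phi>1 x = char_poly k f T * mono S x + low x" for x
    proof -
      have "\<Phi>1 x = (\<Sum>W\<in>Pow T'. e W * mono W (\<lambda>j. x (\<pi>' j)))" unfolding \<Phi>1_def by (rule s)
      also have "\<dots> = (\<Sum>W\<in>Pow T'. e W * mono (\<pi> ` W) x)" by (intro sum.cong refl) (simp add: mW)
      also have "\<dots> = e T' * mono (\<pi> ` T') x + low x"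
        unfolding low_def using T'(3) by (subst sum.remove[of _ T']) auto
      finally show ?thesis by (simp add: e \<pi>S)
    qed
    have Vlow: "inV k f l low" unfolding low_def
    proof (rule inV_sum)
      show "finite (Pow T' - {T'})" using T'(3) by simp
      fix W assume W: "W \<in> Pow T' - {T'}"
      then have "W \<subset> T'" by auto
      then have "card W < card T'" using T'(3) psubset_card_mono by blast
      moreover have "card (\<pi> ` W) = card W" using bij W
        by (intro card_image) (auto simp: bij_betw_def intro: inj_on_subset)
      moreover have "\<pi> ` W \<subseteq> S" using W \<pi>S by auto
      ultimately have "inV k f l (mono (\<pi> ` W))"
        using less.hyps[of "\<pi> ` W"] less.prems T'(2) by auto
      then show "inV k f l (\<lambda>x. e W * mono (\<pi> ` W) x)" by (rule inV_scale)
    qed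
    have "inV k f l (\<lambda>x. (1 / char_poly k f T) * (\<Phi>1 x + (-1) * low x))"
      by (intro inV_scale inV_add V1 Vlow)
    moreover have "(\<lambda>x. (1 / char_poly k f T) * (\<Phi>1 x + (-1) * low x)) = mono S"
      using cT by (auto simp: dec field_simps)
    ultimately show ?thesis by simp
  qed
qed

theorem lemma15:
  fixes k :: nat and f :: "bool list \<Rightarrow> bool" and l :: nat and P :: mlpoly
  assumes "nontrivial k f"
    and "ml_poly l P"
    and "ml_deg P \<le> cdeg k f"
  shows "\<exists>fs :: (nat \<times> (bool list \<Rightarrow> bool) \<times> nat list \<times> rat) list.
           (\<forall>(a, g, js, \<alpha>) \<in> set fs.
               expressible a g k f \<and> length js = a \<and> (\<forall>j\<in>set js. j < l)) \<and>
           (\<forall>x :: nat \<Rightarrow> rat.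
               ml_eval l P x =
               (\<Sum>(a, g, js, \<alpha>) \<leftarrow> fs. \<alpha> * ml_eval a (char_poly a g) (\<lambda>t. x (js ! t))))"
proof -
  have fin: "finite {card S | S. P S \<noteq> 0}"
  proof (rule finite_subset[of _ "{..l}"])
    show "{card S | S. P S \<noteq> 0} \<subseteq> {..l}"
    proof
      fix n assume "n \<in> {card S | S. P S \<noteq> 0}"
      then obtain U where "n = card U" "P U \<noteq> 0" by blast
      then have "U \<subseteq> {..<l}" using assms(2) unfolding ml_poly_def by blast
      then have "card U \<le> card {..<l}" by (intro card_mono) auto
      then show "n \<in> {..l}" using \<open>n = card U\<close> by simp
    qed
  qed simp
  have "inV k f l (\<lambda>x. \<Sum>S\<in>Pow {..<l}. P S * mono S x)"
  proof (rule inV_sum)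
    fix S assume S: "S \<in> Pow {..<l}"
    show "inV k f l (\<lambda>x. P S * mono S x)"
    proof (cases "P S = 0")
      case True then show ?thesis using inV_zero by simp
    next
      case False
      then have "card S \<le> ml_deg P" unfolding ml_deg_def using fin by (intro Max_ge) auto
      then have "inV k f l (mono S)" using inV_mono[OF assms(1)] S assms(3) by auto
      then show ?thesis by (rule inV_scale)
    qed
  qed simp
  then show ?thesis unfolding inV_def ml_eval_mono by simp
qed

end
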